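(* For the system of $N$ symplectic point vortices in $\mathbb R^{2m}$ (the Hamiltonian system on $(\mathbb R^{2m})^N$ with Poisson bracket $\{f,g\}=\sum_{j=1}^N\frac1{\Gamma_j}\sum_{\alpha=1}^m\big(\frac{\partial f}{\partial x_{j,\alpha}}\frac{\partial g}{\partial y_{j,\alpha}}-\frac{\partial f}{\partial y_{j,\alpha}}\frac{\partial g}{\partial x_{j,\alpha}}\big)$ and Hamiltonian $\mathcal H=2C(2m)\sum_{j<k}\Gamma_j\Gamma_k|\tilde z_j-\tilde z_k|^{2-2m}$ for $m>1$, resp. $\mathcal H=-\frac1{4\pi}\sum_{j<k}\Gamma_j\Gamma_k\ln|\tilde z_j-\tilde z_k|^2$ for $m=1$), the functions $$\mathcal H,\qquad F^+_{\alpha\alpha}=\sum_{j=1}^N\Gamma_j(x_{j,\alpha}^2+y_{j,\alpha}^2),\qquad Q_\alpha^2+P_\alpha^2\quad(1\le\alpha\le m),$$ where $Q_\alpha=\sum_{j}\Gamma_jx_{j,\alpha}$ and $P_\alpha=\sum_j\Gamma_jy_{j,\alpha}$, provide $2m+1$ first integrals in involution on $(\mathbb R^{2m})^N$.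
   Context: $\tilde z_j=(x_{j,1},\dots,x_{j,m},y_{j,1},\dots,y_{j,m})\in\mathbb R^{2m}$ is the position of the $j$-th vortex, $\Gamma_j\neq0$ are real vortex strengths, $|\cdot|$ is the Euclidean norm, and $C(2m)$ is the constant with $\Delta(C(2m)|\tilde z|^{2-2m})=\delta$ in $\mathbb R^{2m}$. The equations of motion are $\Gamma_j\dot x_{j,\alpha}=\partial\mathcal H/\partial y_{j,\alpha}$, $\Gamma_j\dot y_{j,\alpha}=-\partial\mathcal H/\partial x_{j,\alpha}$. "In involution" means pairwise Poisson commuting. *)

theory Defs
  imports "HOL-Analysis.Analysis"
begin

text \<open>Phase space (R^{2m})^N: a configuration z assigns to each vortex j (index type 'n,
  N = CARD('n)) and each alpha (index type 'm, m = CARD('m)) the pair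
  (x_{j,alpha}, y_{j,alpha}).  Then z$j is the position of vortex j in R^{2m},
  and norm (z$j) is its Euclidean norm.\<close>

type_synonym ('m, 'n) phase = "((real \<times> real) ^ 'm) ^ 'n"

definition xco :: "('m::finite, 'n::finite) phase \<Rightarrow> 'n \<Rightarrow> 'm \<Rightarrow> real" where
  "xco z j a = fst (z $ j $ a)"

definition yco :: "('m::finite, 'n::finite) phase \<Rightarrow> 'n \<Rightarrow> 'm \<Rightarrow> real" where
  "yco z j a = snd (z $ j $ a)"

definition ex :: "'n \<Rightarrow> 'm \<Rightarrow> ('m::finite, 'n::finite) phase" where
  "ex j a = (\<chi> k. \<chi> b. if k = j \<and> b = a then (1, 0) else (0, 0))"

definition ey :: "'n \<Rightarrow> 'm \<Rightarrow> ('m::finite, 'n::finite) phase" where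
  "ey j a = (\<chi> k. \<chi> b. if k = j \<and> b = a then (0, 1) else (0, 0))"

definition dx :: "(('m::finite, 'n::finite) phase \<Rightarrow> real) \<Rightarrow> ('m, 'n) phase \<Rightarrow> 'n \<Rightarrow> 'm \<Rightarrow> real" where
  "dx f z j a = deriv (\<lambda>t. f (z + t *\<^sub>R ex j a)) 0"

definition dy :: "(('m::finite, 'n::finite) phase \<Rightarrow> real) \<Rightarrow> ('m, 'n) phase \<Rightarrow> 'n \<Rightarrow> 'm \<Rightarrow> real" where
  "dy f z j a = deriv (\<lambda>t. f (z + t *\<^sub>R ey j a)) 0"

definition pbracket :: "('n \<Rightarrow> real) \<Rightarrow> (('m::finite, 'n::finite) phase \<Rightarrow> real)
    \<Rightarrow> (('m, 'n) phase \<Rightarrow> real) \<Rightarrow> ('m, 'n) phase \<Rightarrow> real" where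
  "pbracket \<Gamma> f g z = (\<Sum>j\<in>UNIV. (1 / \<Gamma> j) *
      (\<Sum>a\<in>UNIV. dx f z j a * dy g z j a - dy f z j a * dx g z j a))"

text \<open>C(n): the constant with Laplacian (C(n) |z|^{2-n}) = delta in R^n, n = 2m, m > 1:
  C(n) = -1/((n-2) |S^{n-1}|), |S^{2m-1}| = 2 pi^m/(m-1)!, so C(2m) = -(m-2)!/(4 pi^m).\<close>
definition Cconst :: "nat \<Rightarrow> real" where
  "Cconst m = - fact (m - 2) / (4 * pi ^ m)"

definition noncoll :: "('m::finite, 'n::finite) phase set" where
  "noncoll = {z. \<forall>j k. j \<noteq> k \<longrightarrow> z $ j \<noteq> z $ k}"

text \<open>Hamiltonian; the sum over j<k is written as half the sum over ordered pairs j \<noteq> k.\<close>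
definition ham :: "('n \<Rightarrow> real) \<Rightarrow> ('m::finite, 'n::finite) phase \<Rightarrow> real" where
  "ham \<Gamma> z = (if CARD('m) = 1 then
      - (1 / (4 * pi)) * ((1/2) * (\<Sum>(j,k)\<in>{(j,k). j \<noteq> k}.
            \<Gamma> j * \<Gamma> k * ln ((norm (z $ j - z $ k))\<^sup>2)))
    else 2 * Cconst CARD('m) * ((1/2) * (\<Sum>(j,k)\<in>{(j,k). j \<noteq> k}.
            \<Gamma> j * \<Gamma> k * norm (z $ j - z $ k) powr (2 - 2 * real CARD('m)))))"

definition Fplus :: "('n \<Rightarrow> real) \<Rightarrow> 'm \<Rightarrow> ('m::finite, 'n::finite) phase \<Rightarrow> real" where
  "Fplus \<Gamma> a z = (\<Sum>j\<in>UNIV. \<Gamma> j * ((xco z j a)\<^sup>2 + (yco z j a)\<^sup>2))"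

definition Qc :: "('n \<Rightarrow> real) \<Rightarrow> 'm \<Rightarrow> ('m::finite, 'n::finite) phase \<Rightarrow> real" where
  "Qc \<Gamma> a z = (\<Sum>j\<in>UNIV. \<Gamma> j * xco z j a)"

definition Pc :: "('n \<Rightarrow> real) \<Rightarrow> 'm \<Rightarrow> ('m::finite, 'n::finite) phase \<Rightarrow> real" where
  "Pc \<Gamma> a z = (\<Sum>j\<in>UNIV. \<Gamma> j * yco z j a)"

definition QPsq :: "('n \<Rightarrow> real) \<Rightarrow> 'm \<Rightarrow> ('m::finite, 'n::finite) phase \<Rightarrow> real" where
  "QPsq \<Gamma> a z = (Qc \<Gamma> a z)\<^sup>2 + (Pc \<Gamma> a z)\<^sup>2"

end

theory Submission imports Defs begin

lemma deriv_dir: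
  fixes f :: "'a::real_normed_vector \<Rightarrow> real"
  assumes "(f has_derivative D) (at z)"
  shows "deriv (\<lambda>t. f (z + t *\<^sub>R v)) 0 = D v"
proof -
  have l: "linear D" using assms has_derivative_linear by blast
  have 1: "((\<lambda>t::real. z + t *\<^sub>R v) has_derivative (\<lambda>t. t *\<^sub>R v)) (at 0)"
    by (auto intro!: derivative_eq_intros)
  have 2: "(f has_derivative D) (at (z + (0::real) *\<^sub>R v))" using assms by simp
  have "((\<lambda>t. f (z + t *\<^sub>R v)) has_derivative (\<lambda>t. D (t *\<^sub>R v))) (at 0)"
    using has_derivative_compose[OF 1 2] by (simp add: o_def)
  moreover have "(\<lambda>t. D (t *\<^sub>R v)) = (\<lambda>t. D v * t)"
    using linear_cmul[OF l] by (auto simp: mult.commute)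
  ultimately have "((\<lambda>t. f (z + t *\<^sub>R v)) has_field_derivative D v) (at 0)"
    by (simp add: has_field_derivative_def)
  then show ?thesis by (rule DERIV_imp_deriv)
qed

lemma radial_deriv:
  fixes z :: "('a::real_inner) ^ 'n"
  assumes "(\<phi> has_real_derivative \<phi>') (at (norm (z$j - z$k)))" "z$j - z$k \<noteq> 0"
  shows "((\<lambda>w. \<phi> (norm (w$j - w$k))) has_derivative
          (\<lambda>v. \<phi>' * inner (v$j - v$k) (sgn (z$j - z$k)))) (at z)"
proof -
  have 1: "((\<lambda>w. w$j - w$k) has_derivative (\<lambda>v. v$j - v$k)) (at z)"
    by (intro has_derivative_diff bounded_linear.has_derivative[OF bounded_linear_vec_nth] has_derivative_ident)
  have 2: "(norm has_derivative (\<lambda>h. inner h (sgn (z$j - z$k)))) (at (z$j - z$k))"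
    using has_derivative_norm[OF assms(2)] by simp
  have 3: "((\<lambda>w. norm (w$j - w$k)) has_derivative (\<lambda>v. inner (v$j - v$k) (sgn (z$j - z$k)))) (at z)"
    using has_derivative_compose[OF 1 2] by (simp add: o_def)
  have 4: "(\<phi> has_derivative (\<lambda>x. \<phi>' * x)) (at (norm (z$j - z$k)))"
    using assms(1) by (simp add: has_field_derivative_def)
  show ?thesis
    using has_derivative_compose[OF 3 4] by (simp add: o_def mult.commute)
qed

lemma has_derivative_vec_nth' [derivative_intros]:
  "(f has_derivative f') F \<Longrightarrow> ((\<lambda>x. f x $ i) has_derivative (\<lambda>h. f' h $ i)) F"
  using bounded_linear.has_derivative[OF bounded_linear_vec_nth] by blast

lemma sum_pairs_deriv:
  assumes "\<And>j k. (j,k)\<in>S \<Longrightarrow> ((\<lambda>z. g j k z) has_derivative g' j k) (at z)"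
  shows "((\<lambda>z. \<Sum>(j,k)\<in>S. g j k z) has_derivative (\<lambda>v. \<Sum>(j,k)\<in>S. g' j k v)) (at z)"
  using has_derivative_sum[of S "\<lambda>p z. g (fst p) (snd p) z" "\<lambda>p. g' (fst p) (snd p)" "at z"] assms
  by (simp add: split_def)

lemma double_delta:
  fixes f :: "'a::finite \<Rightarrow> 'b::finite \<Rightarrow> 'c::comm_monoid_add"
  shows "(\<Sum>x\<in>UNIV. \<Sum>y\<in>UNIV. if i = x \<and> j = y then f x y else 0) = f i j"
proof -
  have "\<And>x. (\<Sum>y\<in>UNIV. if i = x \<and> j = y then f x y else 0) = (if i = x then f x j else 0)"
    by (case_tac "i = x") simp_all
  then show ?thesis by simp
qed

lemma vec_decomp:
  fixes c d :: "'n::finite \<Rightarrow> 'm::finite \<Rightarrow> real"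
  shows "((\<chi> k b. (c k b, - d k b)) :: ('m,'n) phase) =
     (\<Sum>j\<in>UNIV. \<Sum>a\<in>UNIV. c j a *\<^sub>R ex j a - d j a *\<^sub>R ey j a)"
  by (simp add: vec_eq_iff ex_def ey_def fst_sum snd_sum prod_eq_iff if_distrib double_delta cong: if_cong)

lemma bracket_lin:
  fixes f g :: "('m::finite,'n::finite) phase \<Rightarrow> real"
  assumes df: "(f has_derivative Df) (at z)" and dg: "(g has_derivative Dg) (at z)"
    and G: "\<And>j. \<Gamma> j \<noteq> 0"
    and c: "\<And>j a. Dg (ey j a) = \<Gamma> j * c j a" and d: "\<And>j a. Dg (ex j a) = \<Gamma> j * d j a"
  shows "pbracket \<Gamma> f g z = Df (\<chi> k b. (c k b, - d k b))"
proof -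
  have l: "linear Df" using df has_derivative_linear by blast
  have "pbracket \<Gamma> f g z = (\<Sum>j\<in>UNIV. \<Sum>a\<in>UNIV. Df (ex j a) * c j a - Df (ey j a) * d j a)"
    unfolding pbracket_def dx_def dy_def deriv_dir[OF df] deriv_dir[OF dg] c d
    using G by (simp add: sum_distrib_left algebra_simps)
  also have "\<dots> = Df (\<Sum>j\<in>UNIV. \<Sum>a\<in>UNIV. c j a *\<^sub>R ex j a - d j a *\<^sub>R ey j a)"
    by (simp add: linear_sum[OF l] linear_diff[OF l] linear_cmul[OF l] mult.commute)
  also have "\<dots> = Df (\<chi> k b. (c k b, - d k b))" by (simp add: vec_decomp)
  finally show ?thesis .
qed


definition DF :: "('n \<Rightarrow> real) \<Rightarrow> 'm \<Rightarrow> ('m::finite,'n::finite) phase \<Rightarrow> ('m,'n) phase \<Rightarrow> real" where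
  "DF \<Gamma> a z v = (\<Sum>j\<in>UNIV. \<Gamma> j * (2 * xco z j a * fst (v$j$a) + 2 * yco z j a * snd (v$j$a)))"
definition DQ :: "('n \<Rightarrow> real) \<Rightarrow> 'm \<Rightarrow> ('m::finite,'n::finite) phase \<Rightarrow> real" where
  "DQ \<Gamma> a v = (\<Sum>j\<in>UNIV. \<Gamma> j * fst (v$j$a))"
definition DP :: "('n \<Rightarrow> real) \<Rightarrow> 'm \<Rightarrow> ('m::finite,'n::finite) phase \<Rightarrow> real" where
  "DP \<Gamma> a v = (\<Sum>j\<in>UNIV. \<Gamma> j * snd (v$j$a))"
definition DQP :: "('n \<Rightarrow> real) \<Rightarrow> 'm \<Rightarrow> ('m::finite,'n::finite) phase \<Rightarrow> ('m,'n) phase \<Rightarrow> real" where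
  "DQP \<Gamma> a z v = 2 * Qc \<Gamma> a z * DQ \<Gamma> a v + 2 * Pc \<Gamma> a z * DP \<Gamma> a v"

lemma Fplus_deriv: "(Fplus \<Gamma> a has_derivative DF \<Gamma> a z) (at z)"
  unfolding Fplus_def[abs_def] DF_def[abs_def] xco_def yco_def
  by (auto intro!: derivative_eq_intros simp: algebra_simps)

lemma Qc_deriv: "(Qc \<Gamma> a has_derivative DQ \<Gamma> a) (at z)"
  unfolding Qc_def[abs_def] DQ_def[abs_def] xco_def
  by (auto intro!: derivative_eq_intros simp: algebra_simps)

lemma Pc_deriv: "(Pc \<Gamma> a has_derivative DP \<Gamma> a) (at z)"
  unfolding Pc_def[abs_def] DP_def[abs_def] yco_def
  by (auto intro!: derivative_eq_intros simp: algebra_simps)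

lemma QPsq_deriv: "(QPsq \<Gamma> a has_derivative DQP \<Gamma> a z) (at z)"
proof -
  have "((\<lambda>z. (Qc \<Gamma> a z)\<^sup>2 + (Pc \<Gamma> a z)\<^sup>2) has_derivative DQP \<Gamma> a z) (at z)"
    unfolding DQP_def[abs_def]
    by (auto intro!: derivative_eq_intros Qc_deriv Pc_deriv simp: algebra_simps)
  then show ?thesis by (simp add: QPsq_def[abs_def])
qed

lemma DF_ex: "DF \<Gamma> b z (ex j a) = \<Gamma> j * (if a = b then 2 * xco z j b else 0)"
proof (cases "a = b")
  case True
  have "DF \<Gamma> b z (ex j a) = (\<Sum>k\<in>UNIV. if k = j then \<Gamma> j * (2 * xco z j b) else 0)"
    unfolding DF_def ex_def using True by (intro sum.cong) auto
  then show ?thesis using True by simp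
qed (simp add: DF_def ex_def)
lemma DF_ey: "DF \<Gamma> b z (ey j a) = \<Gamma> j * (if a = b then 2 * yco z j b else 0)"
proof (cases "a = b")
  case True
  have "DF \<Gamma> b z (ey j a) = (\<Sum>k\<in>UNIV. if k = j then \<Gamma> j * (2 * yco z j b) else 0)"
    unfolding DF_def ey_def using True by (intro sum.cong) auto
  then show ?thesis using True by simp
qed (simp add: DF_def ey_def)
lemma DQ_ex: "DQ \<Gamma> b (ex j a) = (if a = b then \<Gamma> j else 0)"
proof (cases "a = b")
  case True
  have "DQ \<Gamma> b (ex j a) = (\<Sum>k\<in>UNIV. if k = j then \<Gamma> j else 0)"
    unfolding DQ_def ex_def using True by (intro sum.cong) auto
  then show ?thesis using True by simp
qed (simp add: DQ_def ex_def)
lemma DP_ey: "DP \<Gamma> b (ey j a) = (if a = b then \<Gamma> j else 0)"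
proof (cases "a = b")
  case True
  have "DP \<Gamma> b (ey j a) = (\<Sum>k\<in>UNIV. if k = j then \<Gamma> j else 0)"
    unfolding DP_def ey_def using True by (intro sum.cong) auto
  then show ?thesis using True by simp
qed (simp add: DP_def ey_def)
lemma DQ_ey: "DQ \<Gamma> b (ey j a) = 0" by (auto simp: DQ_def ey_def intro!: sum.neutral)
lemma DP_ex: "DP \<Gamma> b (ex j a) = 0" by (auto simp: DP_def ex_def intro!: sum.neutral)
lemma DQP_ex: "DQP \<Gamma> b z (ex j a) = \<Gamma> j * (if a = b then 2 * Qc \<Gamma> b z else 0)"
  by (simp add: DQP_def DQ_ex DP_ex)
lemma DQP_ey: "DQP \<Gamma> b z (ey j a) = \<Gamma> j * (if a = b then 2 * Pc \<Gamma> b z else 0)"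
  by (simp add: DQP_def DQ_ey DP_ey)

definition VF :: "'m \<Rightarrow> ('m::finite,'n::finite) phase \<Rightarrow> ('m,'n) phase" where
  "VF a z = (\<chi> k b. (if b = a then 2 * yco z k a else 0, - (if b = a then 2 * xco z k a else 0)))"
definition VQ :: "('n \<Rightarrow> real) \<Rightarrow> 'm \<Rightarrow> ('m::finite,'n::finite) phase \<Rightarrow> ('m,'n) phase" where
  "VQ \<Gamma> a z = (\<chi> k b. (if b = a then 2 * Pc \<Gamma> a z else 0, - (if b = a then 2 * Qc \<Gamma> a z else 0)))"

lemma DF_VF: "DF \<Gamma> b z (VF a z) = 0"
  by (cases "b = a") (simp_all add: DF_def VF_def algebra_simps)
lemma DF_VQ: "DF \<Gamma> b z (VQ \<Gamma> a z) = 0"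
proof (cases "b = a")
  case True
  have "DF \<Gamma> b z (VQ \<Gamma> a z) = (\<Sum>j\<in>UNIV. (4 * Pc \<Gamma> a z) * (\<Gamma> j * xco z j a) - (4 * Qc \<Gamma> a z) * (\<Gamma> j * yco z j a))"
    unfolding DF_def VQ_def using True by (intro sum.cong) (auto simp: algebra_simps)
  also have "\<dots> = 4 * Pc \<Gamma> a z * Qc \<Gamma> a z - 4 * Qc \<Gamma> a z * Pc \<Gamma> a z"
    by (simp add: sum_subtractf sum_distrib_left[symmetric] Qc_def Pc_def)
  finally show ?thesis by simp
qed (simp add: DF_def VQ_def)
lemma DQ_VF: "DQ \<Gamma> b (VF a z) = (if b = a then 2 * Pc \<Gamma> a z else 0)"
  by (simp add: DQ_def VF_def Pc_def sum_distrib_left algebra_simps)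
lemma DP_VF: "DP \<Gamma> b (VF a z) = (if b = a then - 2 * Qc \<Gamma> a z else 0)"
  by (simp add: DP_def VF_def Qc_def sum_distrib_left algebra_simps sum_negf)
lemma DQ_VQ: "DQ \<Gamma> b (VQ \<Gamma> a z) = (if b = a then 2 * Pc \<Gamma> a z * sum \<Gamma> UNIV else 0)"
  by (simp add: DQ_def VQ_def sum_distrib_left sum_distrib_right algebra_simps)
lemma DP_VQ: "DP \<Gamma> b (VQ \<Gamma> a z) = (if b = a then - 2 * Qc \<Gamma> a z * sum \<Gamma> UNIV else 0)"
  by (simp add: DP_def VQ_def sum_distrib_left sum_distrib_right algebra_simps sum_negf)
lemma DQP_VF: "DQP \<Gamma> b z (VF a z) = 0"
  by (simp add: DQP_def DQ_VF DP_VF)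
lemma DQP_VQ: "DQP \<Gamma> b z (VQ \<Gamma> a z) = 0"
  by (simp add: DQP_def DQ_VQ DP_VQ)


lemma pairsum_deriv:
  fixes z :: "('m::finite,'n::finite) phase" and \<Gamma> :: "'n \<Rightarrow> real"
  assumes e: "\<And>j k. j \<noteq> k \<Longrightarrow> (\<phi> has_real_derivative e j k) (at (norm (z$j - z$k)))"
    and nz: "\<And>j k. j \<noteq> k \<Longrightarrow> z$j - z$k \<noteq> 0"
  shows "((\<lambda>w. K * ((1/2) * (\<Sum>(j,k)\<in>{(j,k). j \<noteq> k}. \<Gamma> j * \<Gamma> k * \<phi> (norm (w$j - w$k)))))
     has_derivative (\<lambda>v. \<Sum>(j,k)\<in>{(j,k). j \<noteq> k}.
        (K * (1/2) * (\<Gamma> j * \<Gamma> k * e j k)) * inner (v$j - v$k) (sgn (z$j - z$k)))) (at z)"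
proof -
  have "((\<lambda>w. \<Sum>(j,k)\<in>{(j,k). j \<noteq> k}. \<Gamma> j * \<Gamma> k * \<phi> (norm (w$j - w$k)))
     has_derivative (\<lambda>v. \<Sum>(j,k)\<in>{(j,k). j \<noteq> k}.
        \<Gamma> j * \<Gamma> k * (e j k * inner (v$j - v$k) (sgn (z$j - z$k))))) (at z)"
    by (rule sum_pairs_deriv) (auto intro!: has_derivative_mult_right radial_deriv e nz)
  then have "((\<lambda>w. K * ((1/2) * (\<Sum>(j,k)\<in>{(j,k). j \<noteq> k}. \<Gamma> j * \<Gamma> k * \<phi> (norm (w$j - w$k)))))
     has_derivative (\<lambda>v. K * ((1/2) * (\<Sum>(j,k)\<in>{(j,k). j \<noteq> k}.
        \<Gamma> j * \<Gamma> k * (e j k * inner (v$j - v$k) (sgn (z$j - z$k))))))) (at z)"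
    by (intro has_derivative_mult_right)
  moreover have "(\<lambda>v. K * ((1/2) * (\<Sum>(j,k)\<in>{(j,k). j \<noteq> k}.
        \<Gamma> j * \<Gamma> k * (e j k * inner (v$j - v$k) (sgn (z$j - z$k)))))) =
     (\<lambda>v. \<Sum>(j,k)\<in>{(j,k). j \<noteq> k}.
        (K * (1/2) * (\<Gamma> j * \<Gamma> k * e j k)) * inner (v$j - v$k) (sgn (z$j - z$k)))"
    by (simp add: sum_distrib_left split_def mult.assoc)
  ultimately show ?thesis by simp
qed

lemma ham_deriv:
  fixes z :: "('m::finite,'n::finite) phase" and \<Gamma> :: "'n \<Rightarrow> real"
  assumes "z \<in> noncoll"
  shows "\<exists>c. (ham \<Gamma> has_derivative (\<lambda>v. \<Sum>(j,k)\<in>{(j,k). j \<noteq> k}.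
        c j k * inner (v$j - v$k) (sgn (z$j - z$k)))) (at z)"
proof -
  have nz: "\<And>j k. j \<noteq> k \<Longrightarrow> z$j - z$k \<noteq> 0" using assms by (auto simp: noncoll_def)
  have pos: "\<And>j k. j \<noteq> k \<Longrightarrow> norm (z$j - z$k) > 0" using nz by simp
  show ?thesis
  proof (cases "CARD('m) = 1")
    case True
    have e: "((\<lambda>r. ln (r\<^sup>2)) has_real_derivative (2 / norm (z$j - z$k))) (at (norm (z$j - z$k)))"
      if "j \<noteq> k" for j k
      using pos[OF that]
      by (auto intro!: derivative_eq_intros simp: field_simps power2_eq_square)
    have h: "(ham \<Gamma> :: ('m,'n) phase \<Rightarrow> real) = (\<lambda>w. (- (1 / (4 * pi))) * ((1/2) * (\<Sum>(j,k)\<in>{(j,k). j \<noteq> k}.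
            \<Gamma> j * \<Gamma> k * (\<lambda>r. ln (r\<^sup>2)) (norm (w$j - w$k)))))"
      using True by (simp add: ham_def[abs_def])
    show ?thesis unfolding h by (rule exI, rule pairsum_deriv) (use e nz in auto)
  next
    case False
    have e: "((\<lambda>r. r powr (2 - 2 * real CARD('m))) has_real_derivative
        ((2 - 2 * real CARD('m)) * norm (z$j - z$k) powr ((2 - 2 * real CARD('m)) - 1))) (at (norm (z$j - z$k)))"
      if "j \<noteq> k" for j k
      by (rule has_real_derivative_powr[OF pos[OF that]])
    have h: "(ham \<Gamma> :: ('m,'n) phase \<Rightarrow> real) = (\<lambda>w. (2 * Cconst CARD('m)) * ((1/2) * (\<Sum>(j,k)\<in>{(j,k). j \<noteq> k}.
            \<Gamma> j * \<Gamma> k * (\<lambda>r. r powr (2 - 2 * real CARD('m))) (norm (w$j - w$k)))))"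
      using False by (simp add: ham_def[abs_def])
    show ?thesis unfolding h by (rule exI, rule pairsum_deriv) (use e nz in auto)
  qed
qed


lemma VF_inner: "inner (VF a z $ j - VF a z $ k) (sgn (z$j - z$k)) = 0"
proof -
  have "inner (VF a z $ j - VF a z $ k) (z$j - z$k) = (\<Sum>i\<in>UNIV. if i = a then
     inner (2 * snd (z $ j $ a) - 2 * snd (z $ k $ a), 2 * fst (z $ k $ a) - 2 * fst (z $ j $ a))
       (z $ j $ a - z $ k $ a) else 0)"
    unfolding inner_vec_def by (intro sum.cong) (auto simp: VF_def xco_def yco_def inner_prod_def)
  also have "\<dots> = 0" by (simp add: inner_prod_def algebra_simps)
  finally have "inner (VF a z $ j - VF a z $ k) (z$j - z$k) = 0" .
  then show ?thesis by (simp add: sgn_div_norm)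
qed

lemma VQ_inner: "VQ \<Gamma> a z $ j - VQ \<Gamma> a z $ k = 0"
  by (simp add: VQ_def vec_eq_iff)

theorem corollary4p4:
  fixes \<Gamma> :: "'n::finite \<Rightarrow> real"
  assumes "\<And>j. \<Gamma> j \<noteq> 0"
  shows "\<forall>f \<in> {ham \<Gamma> :: ('m::finite, 'n) phase \<Rightarrow> real} \<union> range (Fplus \<Gamma>) \<union> range (QPsq \<Gamma>).
         \<forall>g \<in> {ham \<Gamma> :: ('m, 'n) phase \<Rightarrow> real} \<union> range (Fplus \<Gamma>) \<union> range (QPsq \<Gamma>).
         \<forall>z \<in> noncoll. pbracket \<Gamma> f g z = 0"
proof (intro ballI)
  fix f g :: "('m, 'n) phase \<Rightarrow> real" and z :: "('m, 'n) phase"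
  assume f: "f \<in> {ham \<Gamma>} \<union> range (Fplus \<Gamma>) \<union> range (QPsq \<Gamma>)"
    and g: "g \<in> {ham \<Gamma>} \<union> range (Fplus \<Gamma>) \<union> range (QPsq \<Gamma>)"
    and z: "z \<in> noncoll"
  have anti: "pbracket \<Gamma> f g z = - pbracket \<Gamma> g f z" for f g
  proof -
    have "pbracket \<Gamma> g f z = (\<Sum>j\<in>UNIV. (1 / \<Gamma> j) * - (\<Sum>a\<in>UNIV. dx f z j a * dy g z j a - dy f z j a * dx g z j a))"
      unfolding pbracket_def by (intro sum.cong refl) (simp add: sum_negf[symmetric] mult.commute)
    also have "\<dots> = - pbracket \<Gamma> f g z" by (simp only: pbracket_def mult_minus_right sum_negf)
    finally show ?thesis by simp
  qed
  have self: "\<And>f. pbracket \<Gamma> f f z = 0" using anti by (metis add.inverse_unique add_eq_0_iff2 neg_equal_zero)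
  have key: "\<exists>D. (h has_derivative D) (at z) \<and> (\<forall>a. D (VF a z) = 0 \<and> D (VQ \<Gamma> a z) = 0)"
    if hin: "h \<in> {ham \<Gamma>} \<union> range (Fplus \<Gamma>) \<union> range (QPsq \<Gamma>)" for h
  proof -
    consider "h = ham \<Gamma>" | b where "h = Fplus \<Gamma> b" | b where "h = QPsq \<Gamma> b" using hin by blast
    then show ?thesis
    proof cases
      case 1
      obtain c where "(ham \<Gamma> has_derivative (\<lambda>v. \<Sum>(j,k)\<in>{(j,k). j \<noteq> k}.
        c j k * inner (v$j - v$k) (sgn (z$j - z$k)))) (at z)" using ham_deriv[OF z] by blast
      then show ?thesis using 1 by (intro exI[of _ "\<lambda>v. \<Sum>(j,k)\<in>{(j,k). j \<noteq> k}.
        c j k * inner (v$j - v$k) (sgn (z$j - z$k))"]) (simp add: VF_inner VQ_inner split_def)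
    next
      case (2 b) then show ?thesis by (intro exI[of _ "DF \<Gamma> b z"]) (simp add: Fplus_deriv DF_VF DF_VQ)
    next
      case (3 b) then show ?thesis by (intro exI[of _ "DQP \<Gamma> b z"]) (simp add: QPsq_deriv DQP_VF DQP_VQ)
    qed
  qed
  have main: "pbracket \<Gamma> f g z = 0" if fin: "f \<in> {ham \<Gamma>} \<union> range (Fplus \<Gamma>) \<union> range (QPsq \<Gamma>)"
     and gin: "g \<in> range (Fplus \<Gamma>) \<union> range (QPsq \<Gamma>)" for f g
  proof -
    obtain D where D: "(f has_derivative D) (at z)" "\<And>a. D (VF a z) = 0" "\<And>a. D (VQ \<Gamma> a z) = 0"
      using key[OF fin] by blast
    consider b where "g = Fplus \<Gamma> b" | b where "g = QPsq \<Gamma> b" using gin by blast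
    then show ?thesis
    proof cases
      case 1
      have "pbracket \<Gamma> f g z = D (\<chi> k a. ((\<lambda>k a. if a = b then 2 * yco z k b else 0) k a,
           - (\<lambda>k a. if a = b then 2 * xco z k b else 0) k a))"
        unfolding 1 by (rule bracket_lin[OF D(1) Fplus_deriv assms]) (simp_all add: DF_ex DF_ey)
      also have "\<dots> = D (VF b z)" by (simp add: VF_def)
      finally show ?thesis using D by simp
    next
      case 2
      have "pbracket \<Gamma> f g z = D (\<chi> k a. ((\<lambda>k a. if a = b then 2 * Pc \<Gamma> b z else 0) k a,
           - (\<lambda>k a. if a = b then 2 * Qc \<Gamma> b z else 0) k a))"
        unfolding 2 by (rule bracket_lin[OF D(1) QPsq_deriv assms]) (simp_all add: DQP_ex DQP_ey)
      also have "\<dots> = D (VQ \<Gamma> b z)" by (simp add: VQ_def)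
      finally show ?thesis using D by simp
    qed
  qed
  show "pbracket \<Gamma> f g z = 0"
  proof (cases "g = ham \<Gamma>")
    case True
    show ?thesis
    proof (cases "f = ham \<Gamma>")
      case True then show ?thesis using \<open>g = ham \<Gamma>\<close> self by simp
    next
      case False
      then have "f \<in> range (Fplus \<Gamma>) \<union> range (QPsq \<Gamma>)" using f by blast
      then have "pbracket \<Gamma> g f z = 0" using main g by blast
      then show ?thesis using anti[of f g] by simp
    qed
  next
    case False
    then show ?thesis using main f g by blast
  qed
qed

end
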